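(* Let $\Omega\subset\mathbb R^3$ be a bounded open set with $C^2$ boundary and let $b\in C(\overline\Omega)\cap C^1(\Omega)$ be such that $-\Delta+b$ in $\Omega$ with Dirichlet boundary conditions is coercive. Then, as $\lambda\to\infty$, uniformly for $x$ from compact subsets of $\Omega$, $$\int_\Omega b(y)U_{x,\lambda}(y)\Big(\frac{\lambda^{-1/2}}{|x-y|}-U_{x,\lambda}(y)\Big)dy=2\pi(\pi-2)b(x)\lambda^{-2}+\mathcal O(\lambda^{-3}\log\lambda).$$
   Context: $U_{x,\lambda}(y)=\lambda^{1/2}(1+\lambda^2|y-x|^2)^{-1/2}$ for $x\in\mathbb R^3$, $\lambda>0$. *)

theory Defs
  imports "HOL-Analysis.Analysis"
begin

definition bubbleU :: "real ^ 3 \<Rightarrow> real \<Rightarrow> real ^ 3 \<Rightarrow> real" where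
  "bubbleU x lam y = sqrt lam / sqrt (1 + lam\<^sup>2 * (norm (y - x))\<^sup>2)"

definition C1_on :: "(real ^ 3) set \<Rightarrow> (real ^ 3 \<Rightarrow> real) \<Rightarrow> bool" where
  "C1_on S f \<longleftrightarrow> (\<exists>g. (\<forall>y\<in>S. (f has_derivative (\<lambda>h. g y \<bullet> h)) (at y)) \<and> continuous_on S g)"

definition C2_on :: "(real ^ 3) set \<Rightarrow> (real ^ 3 \<Rightarrow> real) \<Rightarrow> bool" where
  "C2_on S f \<longleftrightarrow> (\<exists>g. (\<forall>y\<in>S. (f has_derivative (\<lambda>h. g y \<bullet> h)) (at y)) \<and>
                      (\<forall>i. C1_on S (\<lambda>y. g y $ i)))"

definition C2_boundary :: "(real ^ 3) set \<Rightarrow> bool" where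
  "C2_boundary \<Omega> \<longleftrightarrow> (\<forall>p\<in>frontier \<Omega>. \<exists>r>0. \<exists>\<phi> g.
      C2_on (ball p r) \<phi> \<and>
      (\<forall>y\<in>ball p r. (\<phi> has_derivative (\<lambda>h. g y \<bullet> h)) (at y) \<and> g y \<noteq> 0) \<and>
      \<Omega> \<inter> ball p r = {y\<in>ball p r. \<phi> y < 0})"

text \<open>Coercivity of -Delta + b on Omega with Dirichlet boundary conditions:
  the quadratic form int |grad u|^2 + b u^2 dominates c int |grad u|^2 for some c > 0,
  tested on C^1 functions with compact support in Omega (a dense subspace of H^1_0).\<close>
definition dirichlet_coercive :: "(real ^ 3) set \<Rightarrow> (real ^ 3 \<Rightarrow> real) \<Rightarrow> bool" where
  "dirichlet_coercive \<Omega> b \<longleftrightarrow> (\<exists>c>0. \<forall>u g.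
      (\<forall>y. (u has_derivative (\<lambda>h. g y \<bullet> h)) (at y)) \<and> continuous_on UNIV g \<and>
      (\<exists>K. compact K \<and> K \<subseteq> \<Omega> \<and> (\<forall>y. y \<notin> K \<longrightarrow> u y = 0)) \<longrightarrow>
      integral \<Omega> (\<lambda>y. (norm (g y))\<^sup>2 + b y * (u y)\<^sup>2) \<ge> c * integral \<Omega> (\<lambda>y. (norm (g y))\<^sup>2))"

end

theory Submission
  imports Defs
begin


lemma vol_ball3: "r \<ge> 0 \<Longrightarrow> emeasure lborel (ball (c::real^3) r) = ennreal (4/3*pi*r^3)"
  by (simp add: emeasure_ball eval_unit_ball_vol)
lemma vol_cball3: "r \<ge> 0 \<Longrightarrow> emeasure lborel (cball (c::real^3) r) = ennreal (4/3*pi*r^3)"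
  by (simp add: emeasure_cball eval_unit_ball_vol)

lemma cube_int:
  assumes "a \<le> b"
  shows "((\<lambda>r::real. 4*pi*r^2) has_integral (4/3*pi*b^3 - 4/3*pi*a^3)) {a..b}"
proof -
  have "((\<lambda>r::real. 4*pi*r^2) has_integral (4/3*pi*b^3 - 4/3*pi*a^3)) {a..b}"
    apply (rule fundamental_theorem_of_calculus[OF assms])
    apply (auto intro!: derivative_eq_intros simp: has_real_derivative_iff_has_vector_derivative[symmetric])
    done
  then show ?thesis .
qed



lemma M1_emeasure:
  assumes "A \<in> sets borel"
  shows "emeasure (density lborel (indicator (ball (c::real^3) R))) A = emeasure lborel (ball c R \<inter> A)"
proof -
  have "emeasure (density lborel (indicator (ball (c::real^3) R))) A = (\<integral>\<^sup>+x. indicator (ball c R) x * indicator A x \<partial>lborel)"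
    using assms by (subst emeasure_density) (auto intro!: borel_measurable_indicator)
  also have "\<dots> = (\<integral>\<^sup>+x. indicator (ball c R \<inter> A) x \<partial>lborel)"
    by (intro nn_integral_cong) (auto simp: indicator_def)
  also have "\<dots> = emeasure lborel (ball c R \<inter> A)"
    using assms by (intro nn_integral_indicator) auto
  finally show ?thesis .
qed

lemma N2_emeasure:
  assumes R: "R > 0"
  shows "emeasure (density lborel (\<lambda>r. ennreal (indicator {0..R} r * (4*pi*r^2)))) {a<..}
     = (if a < 0 then ennreal (4/3*pi*R^3) else if a < R then ennreal (4/3*pi*R^3 - 4/3*pi*a^3) else 0)"
proof -
  have "emeasure (density lborel (\<lambda>r. ennreal (indicator {0..R} r * (4*pi*r^2)))) {a<..}
      = (\<integral>\<^sup>+r. ennreal (indicator {0..R} r * (4*pi*r^2)) * indicator {a<..} r \<partial>lborel)"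
    by (subst emeasure_density) auto
  also have "\<dots> = (\<integral>\<^sup>+r. ennreal (indicator ({0..R} \<inter> {a<..}) r * (4*pi*r^2)) \<partial>lborel)"
    by (intro nn_integral_cong) (auto simp: indicator_def)
  also have "\<dots> = (if a < 0 then ennreal (4/3*pi*R^3) else if a < R then ennreal (4/3*pi*R^3 - 4/3*pi*a^3) else 0)"
  proof (cases "a < 0")
    case True
    then have "{0..R} \<inter> {a<..} = {0..R}" by auto
    moreover have "((\<lambda>r::real. 4*pi*r^2) has_integral (4/3*pi*R^3)) {0..R}"
      using cube_int[of 0 R] R by simp
    ultimately show ?thesis using True
      by (subst nn_integral_has_integral_lebesgue[where I="4/3*pi*R^3"]) auto
  next
    case False
    show ?thesis
    proof (cases "a < R")
      case True
      have eq: "{0..R} \<inter> {a<..} = {a<..R}" using False by auto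
      have "((\<lambda>r::real. 4*pi*r^2) has_integral (4/3*pi*R^3 - 4/3*pi*a^3)) {a..R}"
        using cube_int[of a R] True by simp
      then have "((\<lambda>r::real. 4*pi*r^2) has_integral (4/3*pi*R^3 - 4/3*pi*a^3)) {a<..R}"
        by (subst has_integral_spike_set_eq[where T="{a..R}"]) (rule negligible_subset[of "{a}"]; auto)+
      then show ?thesis using True False unfolding eq
        by (subst nn_integral_has_integral_lebesgue[where I="4/3*pi*R^3 - 4/3*pi*a^3"]) auto
    next
      case False2: False
      then have "{0..R} \<inter> {a<..} = {}" by auto
      then show ?thesis using False False2 by simp
    qed
  qed
  finally show ?thesis .
qed



lemma N1_emeasure:
  assumes R: "R > 0"
  shows "emeasure (distr (density lborel (indicator (ball (c::real^3) R))) borel (\<lambda>z. norm (z - c))) {a<..}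
     = (if a < 0 then ennreal (4/3*pi*R^3) else if a < R then ennreal (4/3*pi*R^3 - 4/3*pi*a^3) else 0)"
proof -
  have "emeasure (distr (density lborel (indicator (ball (c::real^3) R))) borel (\<lambda>z. norm (z - c))) {a<..}
     = emeasure (density lborel (indicator (ball (c::real^3) R))) ((\<lambda>z. norm (z - c)) -` {a<..})"
    by (subst emeasure_distr) auto
  also have "\<dots> = emeasure lborel (ball c R \<inter> {z. a < norm (z - c)})"
    by (subst M1_emeasure) (auto simp: vimage_def)
  also have "\<dots> = (if a < 0 then ennreal (4/3*pi*R^3) else if a < R then ennreal (4/3*pi*R^3 - 4/3*pi*a^3) else 0)"
  proof (cases "a < 0")
    case True
    then have "ball c R \<inter> {z. a < norm (z - c)} = ball c R" by (auto intro: less_le_trans[OF _ norm_ge_zero])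
    then show ?thesis using True R by (simp add: vol_ball3)
  next
    case False
    show ?thesis
    proof (cases "a < R")
      case True
      have eq: "ball c R \<inter> {z. a < norm (z - c)} = ball c R - cball c a"
        by (auto simp: dist_norm norm_minus_commute)
      have "emeasure lborel (ball c R - cball c a) = emeasure lborel (ball c R) - emeasure lborel (cball c a)"
        using True False by (intro emeasure_Diff) (auto simp: vol_cball3)
      also have "\<dots> = ennreal (4/3*pi*R^3 - 4/3*pi*a^3)"
        using True False R by (simp add: vol_ball3 vol_cball3 ennreal_minus power_mono)
      finally show ?thesis using True False eq by simp
    next
      case False2: False
      then have "ball c R \<inter> {z. a < norm (z - c)} = {}" by (auto simp: dist_norm norm_minus_commute)
      then show ?thesis using False False2 by simp
    qed
  qed
  finally show ?thesis .
qed

lemma radial: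
  fixes c :: "real^3" and g :: "real \<Rightarrow> real"
  assumes R: "R > 0" and gm: "g \<in> borel_measurable borel" and gnn: "\<And>r. 0 \<le> r \<Longrightarrow> 0 \<le> g r"
    and gi: "((\<lambda>r. 4*pi*r^2 * g r) has_integral V) {0..R}"
  shows "((\<lambda>z. g (norm (z - c))) has_integral V) (ball c R)"
proof -
  have gm': "(\<lambda>z. g (norm (z - c))) \<in> borel_measurable borel" using gm by measurable
  define M1 :: "(real^3) measure" where "M1 = density lborel (indicator (ball c R))"
  define N1 where "N1 = distr M1 borel (\<lambda>z. norm (z - c))"
  define N2 :: "real measure" where "N2 = density lborel (\<lambda>r. ennreal (indicator {0..R} r * (4*pi*r^2)))"
  have N12: "N1 = N2"
  proof (rule measure_eqI_lessThan)
    show "sets N1 = sets borel" by (simp add: N1_def)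
    show "sets N2 = sets borel" by (simp add: N2_def)
    show "emeasure N1 {x<..} < \<infinity>" for x
      unfolding N1_def M1_def using R by (subst N1_emeasure) auto
    show "emeasure N1 {x<..} = emeasure N2 {x<..}" for x
      unfolding N1_def M1_def N2_def using R by (simp add: N1_emeasure N2_emeasure)
  qed
  have V0: "V \<ge> 0"
    using gi by (rule has_integral_nonneg) (auto intro!: mult_nonneg_nonneg gnn)
  have "(\<integral>\<^sup>+z. ennreal (indicator (ball c R) z * g (norm (z - c))) \<partial>lborel)
      = (\<integral>\<^sup>+z. indicator (ball c R) z * ennreal (g (norm (z - c))) \<partial>lborel)"
    by (intro nn_integral_cong) (auto simp: indicator_def)
  also have "\<dots> = (\<integral>\<^sup>+z. ennreal (g (norm (z - c))) \<partial>M1)"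
    unfolding M1_def by (subst nn_integral_density) (auto intro!: borel_measurable_indicator measurable_compose[OF gm' measurable_ennreal])
  also have "\<dots> = (\<integral>\<^sup>+r. ennreal (g r) \<partial>N1)"
    unfolding N1_def by (subst nn_integral_distr) (auto simp: M1_def intro!: measurable_compose[OF gm measurable_ennreal])
  also have "\<dots> = (\<integral>\<^sup>+r. ennreal (g r) \<partial>N2)" using N12 by simp
  also have "\<dots> = (\<integral>\<^sup>+r. ennreal (indicator {0..R} r * (4*pi*r^2)) * ennreal (g r) \<partial>lborel)"
    unfolding N2_def by (subst nn_integral_density) (auto intro!: measurable_compose[OF gm measurable_ennreal])
  also have "\<dots> = (\<integral>\<^sup>+r. ennreal (indicator {0..R} r * (4*pi*r^2 * g r)) \<partial>lborel)"
    by (intro nn_integral_cong) (auto simp: indicator_def ennreal_mult[symmetric] gnn)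
  also have "\<dots> = ennreal V"
    by (rule nn_integral_has_integral_lebesgue) (auto intro!: gi mult_nonneg_nonneg gnn)
  finally have nn: "(\<integral>\<^sup>+z. ennreal (indicator (ball c R) z * g (norm (z - c))) \<partial>lborel) = ennreal V" .
  have "((\<lambda>z. indicator (ball c R) z * g (norm (z - c))) has_integral V) UNIV"
    by (rule nn_integral_has_integral[OF _ _ nn V0]) (auto intro!: borel_measurable_times borel_measurable_indicator gnn gm' simp: indicator_def)
  then have "((\<lambda>z. if z \<in> ball c R then g (norm (z - c)) else 0) has_integral V) UNIV"
    by (rule has_integral_eq[rotated]) (auto simp: indicator_def)
  then show ?thesis by (subst has_integral_restrict_UNIV[symmetric]) simp
qed



definition kf :: "real \<Rightarrow> real \<Rightarrow> real" where
  "kf L r = (if r \<le> 0 then 0 else 1/(r * sqrt(1+L^2*r^2)) - L/(1+L^2*r^2))"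

definition hf :: "real \<Rightarrow> real \<Rightarrow> real" where
  "hf L r = 1/(L^2*r^2*(1+L*r))"

lemma kf_ident:
  assumes L: "L > 0" and r: "r > 0"
  shows "kf L r = 1/(r*(1+L^2*r^2)*(sqrt(1+L^2*r^2)+L*r))"
proof -
  define s where "s = sqrt(1+L^2*r^2)"
  have s0: "s > 0" unfolding s_def by (simp add: add_pos_nonneg)
  have s2: "s^2 = 1+L^2*r^2" unfolding s_def by (simp add: add_nonneg_nonneg)
  have sp: "s + L*r > 0" using s0 L r by (metis add_pos_pos mult_pos_pos)
  have e: "(s - L*r) * (s + L*r) = 1" using s2 by (simp add: algebra_simps power2_eq_square)
  have "kf L r = 1/(r * s) - L/s^2" using r s2 by (simp add: kf_def s_def)
  also have "\<dots> = (s - L*r)/(r * s^2)" using r s0 by (simp add: field_simps power2_eq_square)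
  also have "s - L*r = 1/(s+L*r)" using e sp by (simp add: field_simps)
  finally show ?thesis using s2 by (simp add: s_def field_simps)
qed

lemma kf_nonneg: 
  assumes L: "L > 0" shows "kf L r \<ge> 0"
proof (cases "r > 0")
  case True
  have "1+L^2*r^2 > 0" by (simp add: add_pos_nonneg)
  moreover have "sqrt(1+L^2*r^2)+L*r > 0" using L True by (metis add_pos_pos mult_pos_pos real_sqrt_gt_zero \<open>1+L^2*r^2 > 0\<close>)
  ultimately show ?thesis using kf_ident[OF L True] True by simp
qed (simp add: kf_def)

lemma kf_tail:
  assumes L: "L > 0" and d: "d > 0" and r: "r \<ge> d"
  shows "kf L r \<le> 1/(2*L^3*d^4)"
proof -
  define t where "t = L*r"
  have t0: "t > 0" using L d r by (simp add: t_def)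
  have t2: "1 + t^2 > 0" by (simp add: add_pos_nonneg)
  have st: "sqrt(1+L^2*r^2) \<ge> t"
    unfolding t_def by (rule real_le_rsqrt) (simp add: power_mult_distrib)
  have "kf L r = 1/(r*(1+t^2)*(sqrt(1+L^2*r^2)+t))"
    using kf_ident[OF L] d r by (simp add: t_def power_mult_distrib)
  also have "\<dots> \<le> 1/(r*t^2*(2*t))"
    using t0 t2 d r st by (intro divide_left_mono mult_mono mult_pos_pos) auto
  also have "\<dots> = 1/(2*L^3*r^4)" by (simp add: t_def field_simps power_mult_distrib eval_nat_numeral)
  also have "\<dots> \<le> 1/(2*L^3*d^4)"
    using L d r by (intro divide_left_mono mult_left_mono mult_pos_pos power_mono) auto
  finally show ?thesis .
qed

lemma kf_lin:
  assumes L: "L > 0" and r: "r \<ge> 0"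
  shows "r * kf L r \<le> hf L r"
proof (cases "r = 0")
  case True then show ?thesis by (simp add: kf_def hf_def)
next
  case False
  then have r0: "r > 0" using r by simp
  define t where "t = L*r"
  have t0: "t > 0" using L r0 by (simp add: t_def)
  have t2: "1 + t^2 > 0" by (simp add: add_pos_nonneg)
  have st: "sqrt(1+L^2*r^2) \<ge> t"
    unfolding t_def by (rule real_le_rsqrt) (simp add: power_mult_distrib)
  have s1: "sqrt(1+L^2*r^2) \<ge> 1" by simp
  have "r * kf L r = 1/((1+t^2)*(sqrt(1+L^2*r^2)+t))"
    using kf_ident[OF L r0] r0 by (simp add: t_def power_mult_distrib)
  also have "\<dots> \<le> 1/(t^2*(1+t))"
    using t0 t2 st s1 by (intro divide_left_mono mult_mono mult_pos_pos) auto
  also have "\<dots> = hf L r" by (simp add: t_def hf_def power_mult_distrib)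
  finally show ?thesis .
qed



lemma kf_r2: "L > 0 \<Longrightarrow> r \<ge> 0 \<Longrightarrow> 4*pi*r^2 * kf L r = 4*pi*(r/sqrt(1+L^2*r^2) - L*r^2/(1+L^2*r^2))"
  by (cases "r = 0") (auto simp: kf_def field_simps power2_eq_square add_pos_nonneg)

lemma F_deriv:
  assumes L: "L > 0"
  shows "((\<lambda>r. 4*pi*(sqrt(1+L^2*r^2)/L^2 - r/L + arctan(L*r)/L^2)) has_real_derivative
          4*pi*(r/sqrt(1+L^2*r^2) - L*r^2/(1+L^2*r^2))) (at r)"
proof -
  have p: "1+L^2*r^2 > 0" by (simp add: add_pos_nonneg)
  have A: "((\<lambda>r. sqrt(1+L^2*r^2)) has_real_derivative (inverse (sqrt (1+L^2*r^2)) / 2 * (L^2*(2*r)))) (at r)"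
    by (rule DERIV_chain2[where g="\<lambda>r. 1+L^2*r^2", OF DERIV_real_sqrt[OF p]]) (auto intro!: derivative_eq_intros)
  have C: "((\<lambda>r. arctan (L*r)) has_real_derivative inverse(1+(L*r)^2) * L) (at r)"
    by (rule DERIV_chain2[where g="\<lambda>r. L*r", OF DERIV_arctan]) (auto intro!: derivative_eq_intros)
  have "((\<lambda>r. 4*pi*(sqrt(1+L^2*r^2)/L^2 - r/L + arctan(L*r)/L^2)) has_real_derivative
      4*pi*((inverse (sqrt (1+L^2*r^2)) / 2 * (L^2*(2*r)))/L^2 - 1/L + inverse(1+(L*r)^2) * L/L^2)) (at r)"
    by (intro DERIV_cmult DERIV_add DERIV_diff DERIV_cdivide A C DERIV_ident)
  moreover have "4*pi*((inverse (sqrt (1+L^2*r^2)) / 2 * (L^2*(2*r)))/L^2 - 1/L + inverse(1+(L*r)^2) * L/L^2)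
     = 4*pi*(r/sqrt(1+L^2*r^2) - L*r^2/(1+L^2*r^2))"
  proof -
    define s where "s = sqrt(1+L^2*r^2)"
    have s0: "s > 0" using p by (simp add: s_def)
    have h1: "inverse s / 2 * (L^2*(2*r)) / L^2 = r/s" using L s0 by (simp add: field_simps)
    have h2: "- 1/L + inverse(1+(L*r)^2)*L/L^2 = - L*r^2/(1+L^2*r^2)"
      using L p by (simp add: divide_simps power2_eq_square) (simp add: algebra_simps)
    have "4*pi*((inverse s / 2 * (L^2*(2*r)))/L^2 - 1/L + inverse(1+(L*r)^2) * L/L^2)
       = 4*pi*(inverse s / 2 * (L^2*(2*r)) / L^2 + (- 1/L + inverse(1+(L*r)^2)*L/L^2))" by simp
    also have "\<dots> = 4*pi*(r/s - L*r^2/(1+L^2*r^2))" by (simp only: h1 h2) simp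
    finally show ?thesis unfolding s_def .
  qed
  ultimately show ?thesis by simp
qed

definition FA :: "real \<Rightarrow> real \<Rightarrow> real" where
  "FA L r = 4*pi*(sqrt(1+L^2*r^2)/L^2 - r/L + arctan(L*r)/L^2)"

lemma kf_int:
  assumes L: "L > 0" and d: "d > 0"
  shows "((\<lambda>r. 4*pi*r^2 * kf L r) has_integral (FA L d - FA L 0)) {0..d}"
proof -
  have "((\<lambda>r. 4*pi*(r/sqrt(1+L^2*r^2) - L*r^2/(1+L^2*r^2))) has_integral (FA L d - FA L 0)) {0..d}"
    unfolding FA_def using d
    by (intro fundamental_theorem_of_calculus) (auto intro!: has_field_derivative_imp_has_derivative DERIV_subset[OF F_deriv[OF L]] simp: has_real_derivative_iff_has_vector_derivative[symmetric])
  then show ?thesis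
    by (rule has_integral_eq[rotated]) (simp add: kf_r2 L)
qed

lemma hf_int:
  assumes L: "L > 0" and d: "d > 0"
  shows "((\<lambda>r. 4*pi*r^2 * hf L r) has_integral (4*pi*ln(1+L*d)/L^3)) {0..d}"
proof -
  have "((\<lambda>r. 4*pi/(L^2*(1+L*r))) has_integral (4*pi*ln(1+L*d)/L^3 - 4*pi*ln(1+L*0)/L^3)) {0..d}"
  proof (intro fundamental_theorem_of_calculus)
    show "0 \<le> d" using d by simp
    fix x assume x: "x \<in> {0..d}"
    have p: "1 + L*x > 0" using x L by (simp add: add_pos_nonneg)
    have "((\<lambda>r. 4*pi*ln(1+L*r)/L^3) has_real_derivative 4*pi*(inverse (1+L*x) * L)/L^3) (at x)"
      by (intro DERIV_cdivide DERIV_cmult DERIV_chain2[where g="\<lambda>r. 1+L*r", OF DERIV_ln[OF p]]) (auto intro!: derivative_eq_intros)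
    moreover have "4*pi*(inverse (1+L*x) * L)/L^3 = 4*pi/(L^2*(1+L*x))"
    proof -
      have "4*pi*(inverse (1+L*x) * L)/L^3 = 4*pi*L/(L*(L^2*(1+L*x)))" by (simp add: field_simps eval_nat_numeral)
      also have "\<dots> = 4*pi/(L^2*(1+L*x))" using L p by simp
      finally show ?thesis .
    qed
    ultimately show "((\<lambda>r. 4*pi*ln(1+L*r)/L^3) has_vector_derivative 4*pi/(L^2*(1+L*x))) (at x within {0..d})"
      by (auto simp: has_real_derivative_iff_has_vector_derivative[symmetric] intro: DERIV_subset)
  qed
  then have I: "((\<lambda>r. 4*pi/(L^2*(1+L*r))) has_integral (4*pi*ln(1+L*d)/L^3)) {0..d}" by simp
  show ?thesis
    by (rule has_integral_spike[where S="{0}", OF _ _ I]) (auto simp: hf_def L)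
qed



lemma FA_bound:
  assumes L: "L > 0" and d: "d > 0"
  shows "\<bar>(FA L d - FA L 0) - 2*pi*(pi-2)/L^2\<bar> \<le> 8*pi/(L^3*d)"
proof -
  define t where "t = L*d"
  have t0: "t > 0" using L d by (simp add: t_def)
  define s where "s = sqrt(1+t^2)"
  have s2: "s^2 = 1+t^2" unfolding s_def by (simp add: add_nonneg_nonneg)
  have st: "s \<ge> t" unfolding s_def by (rule real_le_rsqrt) simp
  have e: "(s - t) * (s + t) = 1" using s2 by (simp add: algebra_simps power2_eq_square)
  have b1: "s - t \<ge> 0" using st by simp
  have b2: "s - t \<le> 1/t"
  proof -
    have "s - t = 1/(s+t)" using e t0 st by (simp add: field_simps)
    also have "\<dots> \<le> 1/t" using t0 st by (intro divide_left_mono) auto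
    finally show ?thesis .
  qed
  have a1: "\<bar>arctan t - pi/2\<bar> \<le> 1/t"
  proof -
    have "arctan (1/t) = pi/2 - arctan t" using arctan_inverse[of t] t0 by (simp add: inverse_eq_divide)
    moreover have "\<bar>arctan (1/t)\<bar> \<le> \<bar>1/t\<bar>" by (rule abs_arctan_le)
    ultimately show ?thesis using t0 by simp
  qed
  have eq: "(FA L d - FA L 0) - 2*pi*(pi-2)/L^2 = 4*pi/L^2 * ((s - t) + (arctan t - pi/2))"
    using L unfolding FA_def s_def t_def by (simp add: field_simps power_mult_distrib eval_nat_numeral)
  have X: "\<bar>(s - t) + (arctan t - pi/2)\<bar> \<le> 2/t" using b1 b2 a1 by linarith
  have P: "0 \<le> 4*pi/L^2" by simp
  have "\<bar>(FA L d - FA L 0) - 2*pi*(pi-2)/L^2\<bar> = 4*pi/L^2 * \<bar>(s - t) + (arctan t - pi/2)\<bar>"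
    by (simp only: eq abs_mult abs_of_nonneg[OF P])
  also have "\<dots> \<le> 4*pi/L^2 * (2/t)" by (rule mult_left_mono[OF X P])
  also have "\<dots> = 8*pi/(L^3*d)" using L d by (simp add: t_def field_simps eval_nat_numeral)
  finally show ?thesis .
qed



lemma bubble_kf:
  assumes L: "L > 0" and yx: "y \<noteq> x"
  shows "bubbleU x L y * (1 / (sqrt L * norm (x - y)) - bubbleU x L y) = kf L (norm (y - x))"
proof -
  define r where "r = norm (y - x)"
  have r0: "r > 0" using yx by (simp add: r_def)
  have rr: "norm (x - y) = r" by (simp add: r_def norm_minus_commute)
  define s where "s = sqrt (1 + L^2 * r^2)"
  have s0: "s > 0" unfolding s_def by (simp add: add_pos_nonneg)
  have s2: "s^2 = 1 + L^2*r^2" unfolding s_def by (simp add: add_nonneg_nonneg)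
  have U: "bubbleU x L y = sqrt L / s" by (simp add: bubbleU_def s_def r_def)
  have "bubbleU x L y * (1 / (sqrt L * norm (x - y)) - bubbleU x L y) = 1/(r * s) - (sqrt L)^2 / s^2"
    unfolding U rr using L r0 s0 by (simp add: field_simps power2_eq_square)
  also have "\<dots> = kf L r" using r0 L by (simp add: kf_def s2 s_def)
  finally show ?thesis by (simp add: r_def)
qed

lemma kf_meas: "kf L \<in> borel_measurable borel"
  unfolding kf_def by measurable

lemma hf_meas: "hf L \<in> borel_measurable borel"
  unfolding hf_def by measurable

lemma hf_nonneg: "L > 0 \<Longrightarrow> r \<ge> 0 \<Longrightarrow> hf L r \<ge> 0"
  unfolding hf_def by (simp add: add_nonneg_nonneg)



lemma le_mult_ge1: "(0::real) \<le> a \<Longrightarrow> 1 \<le> l \<Longrightarrow> a \<le> a * l"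
  using mult_left_mono[of 1 l a] by simp

theorem lemma2p7:
  fixes \<Omega> :: "(real ^ 3) set" and b :: "real ^ 3 \<Rightarrow> real"
  assumes "open \<Omega>" and "bounded \<Omega>" and "C2_boundary \<Omega>"
    and "continuous_on (closure \<Omega>) b" and "C1_on \<Omega> b"
    and "dirichlet_coercive \<Omega> b"
  shows "\<forall>K. compact K \<and> K \<subseteq> \<Omega> \<longrightarrow>
    (\<exists>C lam0. \<forall>lam\<ge>lam0. \<forall>x\<in>K.
      \<bar>integral \<Omega> (\<lambda>y. b y * bubbleU x lam y *
           (1 / (sqrt lam * norm (x - y)) - bubbleU x lam y))
        - 2 * pi * (pi - 2) * b x / lam\<^sup>2\<bar> \<le> C * ln lam / lam ^ 3)"
proof (intro allI impI)
  fix K assume "compact K \<and> K \<subseteq> \<Omega>"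
  then have Kc: "compact K" and KO: "K \<subseteq> \<Omega>" by auto
  show "\<exists>C lam0. \<forall>lam\<ge>lam0. \<forall>x\<in>K.
      \<bar>integral \<Omega> (\<lambda>y. b y * bubbleU x lam y *
           (1 / (sqrt lam * norm (x - y)) - bubbleU x lam y))
        - 2 * pi * (pi - 2) * b x / lam\<^sup>2\<bar> \<le> C * ln lam / lam ^ 3"
  proof (cases "K = {}")
    case True then show ?thesis by auto
  next
    case False
    obtain e where e: "e > 0" "{y. infdist y K \<le> e} \<subseteq> \<Omega>"
      using compact_in_open_separated[OF False Kc assms(1) KO] by blast
    define K' where "K' = {x + z | x z. x \<in> K \<and> z \<in> cball 0 e}"
    have K'c: "compact K'" unfolding K'_def by (rule compact_sums[OF Kc compact_cball])
    have K'O: "K' \<subseteq> \<Omega>"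
    proof
      fix y assume "y \<in> K'"
      then obtain x z where xz: "x \<in> K" "z \<in> cball 0 e" "y = x + z" unfolding K'_def by auto
      then have "infdist y K \<le> e" using infdist_le[of x K y] by (auto simp: dist_norm)
      then show "y \<in> \<Omega>" using e by auto
    qed
    have ballK': "cball x e \<subseteq> K'" if "x \<in> K" for x
    proof
      fix y assume "y \<in> cball x e"
      then have "y - x \<in> cball 0 e" "y = x + (y - x)" by (auto simp: dist_norm norm_minus_commute)
      then show "y \<in> K'" unfolding K'_def using that by blast
    qed
    obtain g where g: "\<forall>y\<in>\<Omega>. (b has_derivative (\<lambda>h. g y \<bullet> h)) (at y)" and gc: "continuous_on \<Omega> g"
      using assms(5) unfolding C1_on_def by blast
    have "bounded (g ` K')"
      using compact_continuous_image[OF continuous_on_subset[OF gc K'O] K'c] by (rule compact_imp_bounded)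
    then obtain G where G: "G > 0" "\<forall>y\<in>K'. norm (g y) \<le> G" unfolding bounded_pos by auto
    have lip: "\<bar>b y - b x\<bar> \<le> G * norm (y - x)" if xK: "x \<in> K" and y: "y \<in> cball x e" for x y
    proof -
      have "norm (b y - b x) \<le> G * norm (y - x)"
      proof (rule differentiable_bound[where S="cball x e" and f'="\<lambda>y h. g y \<bullet> h"])
        show "convex (cball x e)" by simp
        fix w assume w: "w \<in> cball x e"
        then have wO: "w \<in> \<Omega>" and wK: "w \<in> K'" using ballK'[OF xK] K'O by auto
        show "(b has_derivative (\<lambda>h. g w \<bullet> h)) (at w within cball x e)"
          using g wO by (auto intro: has_derivative_at_withinI)
        show "onorm (\<lambda>h. g w \<bullet> h) \<le> G"
        proof (rule onorm_le)
          fix h :: "real^3"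
          have "norm (g w \<bullet> h) \<le> norm (g w) * norm h" using Cauchy_Schwarz_ineq2 by simp
          also have "\<dots> \<le> G * norm h" using G wK by (intro mult_right_mono) auto
          finally show "norm (g w \<bullet> h) \<le> G * norm h" .
        qed
      qed (use y e in auto)
      then show ?thesis by simp
    qed
    have bbd: "bounded (b ` closure \<Omega>)"
      using compact_continuous_image[OF assms(4)] assms(2) by (intro compact_imp_bounded) simp
    then obtain M where M: "M > 0" "\<forall>y\<in>closure \<Omega>. norm (b y) \<le> M" unfolding bounded_pos by auto
    have bM: "\<bar>b y\<bar> \<le> M" if "y \<in> \<Omega>" for y using M closure_subset that by auto
    have Ofm: "\<Omega> \<in> lmeasurable" by (rule lmeasurable_open[OF assms(2) assms(1)])
    then have Oleb: "\<Omega> \<in> sets lebesgue" by (rule fmeasurableD)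
    define mO where "mO = measure lebesgue \<Omega>"
    have mO0: "mO \<ge> 0" by (simp add: mO_def)
    define C where "C = 8*pi*M/e + 8*pi*G + M*mO/(2*e^4)"
    show ?thesis
    proof (rule exI[of _ C], rule exI[of _ "max (exp 1) (1+e)"], intro allI impI ballI)
      fix L x assume L0: "L \<ge> max (exp 1) (1+e)" and xK: "x \<in> K"
      have L1: "L \<ge> 1+e" using L0 by simp
      have L: "L > 0" using L1 e by simp
      have lnL: "ln L \<ge> 1" using L0 L by (simp add: ln_ge_iff)
      have xO: "x \<in> \<Omega>" using xK KO by auto
      define k where "k = (\<lambda>y. kf L (norm (y - x)))"
      have knn: "k y \<ge> 0" for y unfolding k_def by (rule kf_nonneg[OF L])
      obtain R0 where R0: "R0 > 0" "\<Omega> \<subseteq> ball x R0" using bounded_subset_ballD[OF assms(2)] by blast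
      have kR0: "(k has_integral (FA L R0 - FA L 0)) (ball x R0)"
        unfolding k_def by (rule radial[OF R0(1) kf_meas _ kf_int[OF L R0(1)]]) (use kf_nonneg L in auto)
      have kabsR0: "k absolutely_integrable_on ball x R0"
        using kR0 knn by (intro nonnegative_absolutely_integrable_1) auto
      have kabs: "k absolutely_integrable_on \<Omega>"
        by (rule set_integrable_subset[OF kabsR0 Oleb R0(2)])
      have bmeas: "b \<in> borel_measurable (lebesgue_on \<Omega>)"
        by (rule continuous_imp_measurable_on_sets_lebesgue[OF continuous_on_subset[OF assms(4) closure_subset] Oleb])
      have bk: "(\<lambda>y. b y * k y) absolutely_integrable_on \<Omega>"
        by (rule absolutely_integrable_bounded_measurable_product[OF bilinear_times bmeas Oleb _ kabs])
           (rule bounded_subset[OF bbd], use closure_subset in auto)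
      have I_eq: "integral \<Omega> (\<lambda>y. b y * bubbleU x L y * (1 / (sqrt L * norm (x - y)) - bubbleU x L y))
          = integral \<Omega> (\<lambda>y. b y * k y)"
        by (rule integral_spike[where S="{x}"]) (auto simp: k_def bubble_kf[OF L] mult.assoc)
      have BO: "ball x e \<subseteq> \<Omega>" using ballK'[OF xK] K'O ball_subset_cball by blast
      have Bleb: "ball x e \<in> sets lebesgue" by (rule fmeasurableD[OF lmeasurable_ball])
      have Dleb: "\<Omega> - ball x e \<in> sets lebesgue" using Oleb Bleb by auto
      have Dfm: "\<Omega> - ball x e \<in> lmeasurable" by (rule fmeasurable_Diff[OF Ofm Bleb])
      have bkB: "(\<lambda>y. b y * k y) integrable_on ball x e"
        using set_integrable_subset[OF bk Bleb BO] by (rule set_lebesgue_integral_eq_integral(1))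
      have bkD: "(\<lambda>y. b y * k y) integrable_on (\<Omega> - ball x e)"
        using set_integrable_subset[OF bk Dleb] by (intro set_lebesgue_integral_eq_integral(1)) auto
      have "((\<lambda>y. b y * k y) has_integral (integral (ball x e) (\<lambda>y. b y * k y) + integral (\<Omega> - ball x e) (\<lambda>y. b y * k y))) (ball x e \<union> (\<Omega> - ball x e))"
        by (rule has_integral_Un[OF integrable_integral[OF bkB] integrable_integral[OF bkD]]) auto
      moreover have "ball x e \<union> (\<Omega> - ball x e) = \<Omega>" using BO by auto
      ultimately have split: "integral \<Omega> (\<lambda>y. b y * k y) = integral (ball x e) (\<lambda>y. b y * k y) + integral (\<Omega> - ball x e) (\<lambda>y. b y * k y)"
        by (simp add: integral_unique)
      have kB: "(k has_integral (FA L e - FA L 0)) (ball x e)"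
        unfolding k_def by (rule radial[OF e(1) kf_meas _ kf_int[OF L e(1)]]) (use kf_nonneg L in auto)
      have hB: "((\<lambda>y. G * hf L (norm (y - x))) has_integral G * (4*pi*ln(1+L*e)/L^3)) (ball x e)"
        by (rule has_integral_mult_right, rule radial[OF e(1) hf_meas _ hf_int[OF L e(1)]]) (use hf_nonneg L in auto)
      have bxk: "((\<lambda>y. b x * k y) has_integral b x * (FA L e - FA L 0)) (ball x e)"
        by (rule has_integral_mult_right[OF kB])
      have diffint: "(\<lambda>y. (b y - b x) * k y) integrable_on ball x e"
        using integrable_diff[OF bkB has_integral_integrable[OF bxk]] by (simp add: algebra_simps)
      have ballval: "integral (ball x e) (\<lambda>y. b y * k y) = b x * (FA L e - FA L 0) + integral (ball x e) (\<lambda>y. (b y - b x) * k y)"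
      proof -
        have "integral (ball x e) (\<lambda>y. (b y - b x) * k y) = integral (ball x e) (\<lambda>y. b y * k y - b x * k y)"
          by (simp add: algebra_simps)
        also have "\<dots> = integral (ball x e) (\<lambda>y. b y * k y) - b x * (FA L e - FA L 0)"
          by (simp add: integral_diff[OF bkB has_integral_integrable[OF bxk]] integral_unique[OF bxk] integral_unique[OF kB])
        finally show ?thesis by simp
      qed
      have err1: "\<bar>integral (ball x e) (\<lambda>y. (b y - b x) * k y)\<bar> \<le> G * (4*pi*ln(1+L*e)/L^3)"
      proof -
        have "norm (integral (ball x e) (\<lambda>y. (b y - b x) * k y)) \<le> integral (ball x e) (\<lambda>y. G * hf L (norm (y - x)))"
        proof (rule integral_norm_bound_integral[OF diffint has_integral_integrable[OF hB]])
          fix y assume y: "y \<in> ball x e"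
          have "norm ((b y - b x) * k y) = \<bar>b y - b x\<bar> * k y" using knn[of y] by (simp add: abs_mult)
          also have "\<dots> \<le> G * norm (y - x) * k y" using lip[OF xK, of y] y knn[of y] by (intro mult_right_mono) auto
          also have "\<dots> = G * (norm (y - x) * kf L (norm (y - x)))" by (simp add: k_def)
          also have "\<dots> \<le> G * hf L (norm (y - x))" using G by (intro mult_left_mono kf_lin[OF L]) auto
          finally show "norm ((b y - b x) * k y) \<le> G * hf L (norm (y - x))" .
        qed
        then show ?thesis using integral_unique[OF hB] by simp
      qed
      define c where "c = M * (1/(2*L^3*e^4))"
      have err2: "\<bar>integral (\<Omega> - ball x e) (\<lambda>y. b y * k y)\<bar> \<le> c * mO"
      proof -
        have one: "((\<lambda>_. 1::real) has_integral measure lebesgue (\<Omega> - ball x e)) (\<Omega> - ball x e)"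
          using lmeasure_integral[OF Dfm] integrable_on_const[OF Dfm] by (metis integrable_integral)
        have cI: "((\<lambda>_. c) has_integral c * measure lebesgue (\<Omega> - ball x e)) (\<Omega> - ball x e)"
          using has_integral_mult_right[OF one, of c] by simp
        have "norm (integral (\<Omega> - ball x e) (\<lambda>y. b y * k y)) \<le> integral (\<Omega> - ball x e) (\<lambda>_. c)"
        proof (rule integral_norm_bound_integral[OF bkD has_integral_integrable[OF cI]])
          fix y assume y: "y \<in> \<Omega> - ball x e"
          have "norm (b y * k y) = \<bar>b y\<bar> * k y" using knn[of y] by (simp add: abs_mult)
          also have "\<dots> \<le> M * k y" using bM[of y] y knn[of y] by (intro mult_right_mono) auto
          also have "\<dots> \<le> c" unfolding c_def k_def using M y e
            by (intro mult_left_mono kf_tail[OF L e(1)]) (auto simp: dist_norm norm_minus_commute)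
          finally show "norm (b y * k y) \<le> c" .
        qed
        also have "\<dots> = c * measure lebesgue (\<Omega> - ball x e)" using integral_unique[OF cI] .
        also have "\<dots> \<le> c * mO" unfolding mO_def c_def using M L e
          by (intro mult_left_mono measure_mono_fmeasurable[OF _ Dleb Ofm]) auto
        finally show ?thesis by simp
      qed
      have err0: "\<bar>b x\<bar> * \<bar>(FA L e - FA L 0) - 2*pi*(pi-2)/L^2\<bar> \<le> M * (8*pi/(L^3*e))"
        using bM[OF xO] FA_bound[OF L e(1)] by (intro mult_mono) auto
      have lnle: "ln (1+L*e) \<le> 2 * ln L"
      proof -
        have "L*(1+e) \<le> L*L" using L1 L by (intro mult_left_mono) auto
        then have "1 + L*e \<le> L^2" using L1 e by (simp add: power2_eq_square algebra_simps)
        then have "ln (1+L*e) \<le> ln (L^2)" using L e by (subst ln_le_cancel_iff) (auto simp: add_pos_nonneg)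
        then show ?thesis using L by (simp add: ln_realpow)
      qed
      define P where "P = 1 / L^3"
      have P0: "P > 0" using L by (simp add: P_def)
      have T1: "M * (8*pi/(L^3*e)) \<le> 8*pi*M/e * ln L * P"
      proof -
        have "M * (8*pi/(L^3*e)) = 8*pi*M/e * P" by (simp add: P_def field_simps)
        also have "\<dots> \<le> 8*pi*M/e * P * ln L" using lnL P0 M e by (intro le_mult_ge1) auto
        finally show ?thesis by (simp add: mult_ac)
      qed
      have T2: "G * (4*pi*ln(1+L*e)/L^3) \<le> 8*pi*G * ln L * P"
      proof -
        have "G * (4*pi*ln(1+L*e)/L^3) = 4*pi*G*P * ln(1+L*e)" by (simp add: P_def field_simps)
        also have "\<dots> \<le> 4*pi*G*P * (2 * ln L)" using lnle G P0 by (intro mult_left_mono) auto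
        finally show ?thesis by (simp add: mult_ac)
      qed
      have T3: "c * mO \<le> M*mO/(2*e^4) * ln L * P"
      proof -
        have "c * mO = M*mO/(2*e^4) * P" by (simp add: c_def P_def field_simps)
        also have "\<dots> \<le> M*mO/(2*e^4) * P * ln L" using lnL P0 M e mO0 by (intro le_mult_ge1) auto
        finally show ?thesis by (simp add: mult_ac)
      qed
      have CP: "C * ln L / L^3 = 8*pi*M/e * ln L * P + 8*pi*G * ln L * P + M*mO/(2*e^4) * ln L * P"
        using L e by (simp add: C_def P_def field_simps)
      have main: "integral \<Omega> (\<lambda>y. b y * bubbleU x L y * (1 / (sqrt L * norm (x - y)) - bubbleU x L y))
          - 2 * pi * (pi - 2) * b x / L\<^sup>2
          = b x * ((FA L e - FA L 0) - 2*pi*(pi-2)/L^2) + integral (ball x e) (\<lambda>y. (b y - b x) * k y)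
            + integral (\<Omega> - ball x e) (\<lambda>y. b y * k y)"
        unfolding I_eq split ballval by (simp add: algebra_simps)
      have "\<bar>b x * ((FA L e - FA L 0) - 2*pi*(pi-2)/L^2)\<bar> \<le> M * (8*pi/(L^3*e))"
        using err0 by (simp add: abs_mult)
      then show "\<bar>integral \<Omega> (\<lambda>y. b y * bubbleU x L y * (1 / (sqrt L * norm (x - y)) - bubbleU x L y))
          - 2 * pi * (pi - 2) * b x / L\<^sup>2\<bar> \<le> C * ln L / L ^ 3"
        unfolding main CP using err1 err2 T1 T2 T3 by linarith
    qed
  qed
qed


end
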